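(* Let $G$ be a finite simple graph, let $s\ge1$ and let $e_1,\ldots,e_s$ be edges of $G$, not necessarily distinct. Suppose $(I(G)^{s+1}:e_1\cdots e_s)$ is a squarefree monomial ideal. Then for each $1\le i\le s$, \[(I(G)^{s+1}:e_1\cdots e_s)=\Big((I(G)^2:e_i)^s:\prod_{j\neq i}e_j\Big).\]
   Context: $I(G)=(uv\mid\{u,v\}\in E(G))\subseteq K[V(G)]$ is the edge ideal over a field $K$; each edge $e=\{a,b\}$ is identified with the monomial $ab$. *)

theory Defs
  imports "HOL-Library.Poly_Mapping"
begin

type_synonym ('v, 'k) mpoly = "('v \<Rightarrow>\<^sub>0 nat) \<Rightarrow>\<^sub>0 'k"

definition ideal_gen :: "'a::comm_ring_1 set \<Rightarrow> 'a set" where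
  "ideal_gen S = {x. \<exists>F f. finite F \<and> F \<subseteq> S \<and> x = (\<Sum>g\<in>F. f g * g)}"

definition ideal_pow :: "'a::comm_ring_1 set \<Rightarrow> nat \<Rightarrow> 'a set" where
  "ideal_pow I k = ideal_gen {prod_list xs | xs. length xs = k \<and> set xs \<subseteq> I}"

definition colon :: "'a::comm_ring_1 set \<Rightarrow> 'a \<Rightarrow> 'a set" where
  "colon I f = {g. g * f \<in> I}"

definition monom1 :: "('v \<Rightarrow>\<^sub>0 nat) \<Rightarrow> ('v, 'k::comm_ring_1) mpoly" where
  "monom1 \<alpha> = Poly_Mapping.single \<alpha> 1"

definition squarefree_monomial_ideal :: "('v, 'k::comm_ring_1) mpoly set \<Rightarrow> bool" where
  "squarefree_monomial_ideal J \<longleftrightarrow>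
     (\<exists>A. (\<forall>\<alpha>\<in>A. \<forall>v. Poly_Mapping.lookup \<alpha> v \<le> 1) \<and> J = ideal_gen (monom1 ` A))"

definition simple_graph :: "'v set set \<Rightarrow> bool" where
  "simple_graph E \<longleftrightarrow> (\<forall>e\<in>E. card e = 2)"

definition edge_mon :: "'v set \<Rightarrow> ('v, 'k::comm_ring_1) mpoly" where
  "edge_mon e = monom1 (\<Sum>v\<in>e. Poly_Mapping.single v 1)"

definition edge_ideal :: "'v set set \<Rightarrow> ('v, 'k::comm_ring_1) mpoly set" where
  "edge_ideal E = ideal_gen (edge_mon ` E)"

end

theory Submission
  imports Defs "HOL-Library.Function_Algebras" "HOL-Library.Multiset"
begin


definition MI :: "('v \<Rightarrow> nat) set \<Rightarrow> ('v, 'k::comm_ring_1) mpoly set" where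
  "MI U = {p. \<forall>\<beta>\<in>Poly_Mapping.keys p. Poly_Mapping.lookup \<beta> \<in> U}"

definition upc :: "('v \<Rightarrow> nat) set \<Rightarrow> bool" where
  "upc U \<longleftrightarrow> (\<forall>f g. f \<in> U \<longrightarrow> f \<le> g \<longrightarrow> g \<in> U)"

lemma poly_expand: "p = (\<Sum>\<beta>\<in>Poly_Mapping.keys p. Poly_Mapping.single \<beta> (Poly_Mapping.lookup p \<beta>))"
proof (rule poly_mapping_eqI)
  fix k
  show "Poly_Mapping.lookup p k = Poly_Mapping.lookup (\<Sum>\<beta>\<in>Poly_Mapping.keys p. Poly_Mapping.single \<beta> (Poly_Mapping.lookup p \<beta>)) k"
    by (auto simp: lookup_sum lookup_single when_def in_keys_iff)
qed

lemma mult_single_expand: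
  fixes g :: "('a::cancel_comm_monoid_add) \<Rightarrow>\<^sub>0 ('b::comm_semiring_1)"
  shows "g * Poly_Mapping.single \<gamma> 1 = (\<Sum>\<beta>\<in>Poly_Mapping.keys g. Poly_Mapping.single (\<beta> + \<gamma>) (Poly_Mapping.lookup g \<beta>))"
proof -
  have "g * Poly_Mapping.single \<gamma> 1 = (\<Sum>\<beta>\<in>Poly_Mapping.keys g. Poly_Mapping.single \<beta> (Poly_Mapping.lookup g \<beta>)) * Poly_Mapping.single \<gamma> 1"
    by (subst poly_expand) (rule refl)
  also have "\<dots> = (\<Sum>\<beta>\<in>Poly_Mapping.keys g. Poly_Mapping.single (\<beta> + \<gamma>) (Poly_Mapping.lookup g \<beta>))"
    by (simp add: sum_distrib_right mult_single)
  finally show ?thesis .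
qed

lemma lookup_mult_single_shift:
  fixes g :: "('a::cancel_comm_monoid_add) \<Rightarrow>\<^sub>0 ('b::comm_semiring_1)"
  shows "Poly_Mapping.lookup (g * Poly_Mapping.single \<gamma> 1) k = (if \<exists>\<beta>. k = \<beta> + \<gamma> then Poly_Mapping.lookup g (THE \<beta>. k = \<beta> + \<gamma>) else 0)"
proof -
  have "Poly_Mapping.lookup (g * Poly_Mapping.single \<gamma> 1) k = (\<Sum>\<beta>\<in>Poly_Mapping.keys g. (Poly_Mapping.lookup g \<beta> when \<beta> + \<gamma> = k))"
    by (simp add: mult_single_expand lookup_sum lookup_single)
  also have "\<dots> = (if \<exists>\<beta>. k = \<beta> + \<gamma> then Poly_Mapping.lookup g (THE \<beta>. k = \<beta> + \<gamma>) else 0)"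
  proof (cases "\<exists>\<beta>. k = \<beta> + \<gamma>")
    case True
    then obtain \<beta>0 where k: "k = \<beta>0 + \<gamma>" by blast
    have the: "(THE \<beta>. k = \<beta> + \<gamma>) = \<beta>0" using k by (rule the_equality) (auto simp: k)
    have "(\<Sum>\<beta>\<in>Poly_Mapping.keys g. (Poly_Mapping.lookup g \<beta> when \<beta> + \<gamma> = k)) = (\<Sum>\<beta>\<in>Poly_Mapping.keys g. (Poly_Mapping.lookup g \<beta> when \<beta> = \<beta>0))"
      by (rule sum.cong) (auto simp: k when_def)
    also have "\<dots> = Poly_Mapping.lookup g \<beta>0"
      by (auto simp: when_def in_keys_iff)
    finally show ?thesis using True the by simp
  next
    case False
    then show ?thesis by (auto simp: when_def intro!: sum.neutral)
  qed
  finally show ?thesis .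
qed

lemma keys_mult_single_shift:
  fixes g :: "('a::cancel_comm_monoid_add) \<Rightarrow>\<^sub>0 ('b::comm_semiring_1)"
  shows "Poly_Mapping.keys (g * Poly_Mapping.single \<gamma> 1) = (\<lambda>\<beta>. \<beta> + \<gamma>) ` Poly_Mapping.keys g"
proof -
  have "k \<in> Poly_Mapping.keys (g * Poly_Mapping.single \<gamma> 1) \<longleftrightarrow> k \<in> (\<lambda>\<beta>. \<beta> + \<gamma>) ` Poly_Mapping.keys g" for k
  proof (cases "\<exists>\<beta>. k = \<beta> + \<gamma>")
    case True
    then obtain \<beta>0 where k: "k = \<beta>0 + \<gamma>" by blast
    have the: "(THE \<beta>. k = \<beta> + \<gamma>) = \<beta>0" using k by (rule the_equality) (auto simp: k)
    show ?thesis using True the k by (auto simp: in_keys_iff lookup_mult_single_shift)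
  next
    case False
    then show ?thesis by (auto simp: in_keys_iff lookup_mult_single_shift)
  qed
  then show ?thesis by blast
qed

lemma lookup_add_fun: "Poly_Mapping.lookup (a + b) = Poly_Mapping.lookup a + Poly_Mapping.lookup b"
  by (rule ext) (simp add: lookup_add)

lemma ig_0: "0 \<in> ideal_gen S"
  unfolding ideal_gen_def by (rule CollectI, rule exI[of _ "{}"]) auto

lemma ig_base: "g \<in> S \<Longrightarrow> g \<in> ideal_gen S"
  unfolding ideal_gen_def by (rule CollectI, rule exI[of _ "{g}"], rule exI[of _ "\<lambda>_. 1"]) auto

lemma ig_add:
  assumes "x \<in> ideal_gen S" "y \<in> ideal_gen S" shows "x + y \<in> ideal_gen S"
proof -
  obtain F f where F: "finite F" "F \<subseteq> S" "x = (\<Sum>g\<in>F. f g * g)" using assms(1) unfolding ideal_gen_def by blast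
  obtain G h where G: "finite G" "G \<subseteq> S" "y = (\<Sum>g\<in>G. h g * g)" using assms(2) unfolding ideal_gen_def by blast
  define f1 where "f1 g = (if g \<in> F then f g else 0)" for g
  define h1 where "h1 g = (if g \<in> G then h g else 0)" for g
  have x: "x = (\<Sum>g\<in>F \<union> G. f1 g * g)"
  proof -
    have "(\<Sum>g\<in>F \<union> G. f1 g * g) = (\<Sum>g\<in>F. f1 g * g)"
      by (rule sum.mono_neutral_right) (use F G in \<open>auto simp: f1_def\<close>)
    also have "\<dots> = x" unfolding F(3) by (rule sum.cong) (auto simp: f1_def)
    finally show ?thesis by simp
  qed
  have y: "y = (\<Sum>g\<in>F \<union> G. h1 g * g)"
  proof -
    have "(\<Sum>g\<in>F \<union> G. h1 g * g) = (\<Sum>g\<in>G. h1 g * g)"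
      by (rule sum.mono_neutral_right) (use F G in \<open>auto simp: h1_def\<close>)
    also have "\<dots> = y" unfolding G(3) by (rule sum.cong) (auto simp: h1_def)
    finally show ?thesis by simp
  qed
  have "x + y = (\<Sum>g\<in>F \<union> G. (f1 g + h1 g) * g)"
    unfolding x y by (simp add: distrib_right sum.distrib)
  then show ?thesis unfolding ideal_gen_def using F G
    by (intro CollectI exI[of _ "F \<union> G"] exI[of _ "\<lambda>g. f1 g + h1 g"]) auto
qed

lemma ig_mult:
  assumes "x \<in> ideal_gen S" shows "h * x \<in> ideal_gen S"
proof -
  obtain F f where F: "finite F" "F \<subseteq> S" "x = (\<Sum>g\<in>F. f g * g)" using assms(1) unfolding ideal_gen_def by blast
  have "h * x = (\<Sum>g\<in>F. (h * f g) * g)" using F by (simp add: sum_distrib_left mult.assoc)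
  then show ?thesis unfolding ideal_gen_def using F
    by (intro CollectI exI[of _ F] exI[of _ "\<lambda>g. h * f g"]) auto
qed

lemma ig_sum: "finite F \<Longrightarrow> (\<And>i. i \<in> F \<Longrightarrow> f i \<in> ideal_gen S) \<Longrightarrow> sum f F \<in> ideal_gen S"
  by (induction F rule: finite_induct) (auto intro: ig_0 ig_add)

lemma ig_least:
  assumes "0 \<in> I" "\<And>x y. x \<in> I \<Longrightarrow> y \<in> I \<Longrightarrow> x + y \<in> I" "\<And>x h. x \<in> I \<Longrightarrow> h * x \<in> I"
    and "T \<subseteq> I"
  shows "ideal_gen T \<subseteq> I"
proof
  fix x assume "x \<in> ideal_gen T"
  then obtain F f where F: "finite F" "F \<subseteq> T" "x = (\<Sum>g\<in>F. f g * g)" unfolding ideal_gen_def by blast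
  have "(\<Sum>g\<in>F. f g * g) \<in> I" using F(1,2)
  proof (induction F rule: finite_induct)
    case empty then show ?case using assms(1) by simp
  next
    case (insert g F) then show ?case using assms(2,3,4) by auto
  qed
  then show "x \<in> I" using F by simp
qed

lemma ig_sub: "T \<subseteq> ideal_gen S \<Longrightarrow> ideal_gen T \<subseteq> ideal_gen S"
  by (rule ig_least) (auto intro: ig_0 ig_add ig_mult)

lemma MI_0: "0 \<in> MI U" by (simp add: MI_def)

lemma MI_add: "x \<in> MI U \<Longrightarrow> y \<in> MI U \<Longrightarrow> x + y \<in> MI U"
  unfolding MI_def
proof (intro CollectI ballI)
  fix k assume x: "x \<in> {p. \<forall>\<beta>\<in>Poly_Mapping.keys p. Poly_Mapping.lookup \<beta> \<in> U}"
    and y: "y \<in> {p. \<forall>\<beta>\<in>Poly_Mapping.keys p. Poly_Mapping.lookup \<beta> \<in> U}"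
    and k: "k \<in> Poly_Mapping.keys (x + y)"
  have "k \<in> Poly_Mapping.keys x \<or> k \<in> Poly_Mapping.keys y" using k keys_add[of x y] by auto
  then show "Poly_Mapping.lookup k \<in> U" using x y by auto
qed

lemma MI_mult:
  assumes "upc U" "x \<in> MI U" shows "h * x \<in> MI U"
  unfolding MI_def
proof (intro CollectI ballI)
  fix k assume "k \<in> Poly_Mapping.keys (h * x)"
  then obtain a b where ab: "k = a + b" "b \<in> Poly_Mapping.keys x" using keys_mult by blast
  have "Poly_Mapping.lookup b \<in> U" using assms(2) ab unfolding MI_def by blast
  moreover have "Poly_Mapping.lookup b \<le> Poly_Mapping.lookup k" unfolding ab lookup_add_fun by (simp add: le_fun_def)
  ultimately show "Poly_Mapping.lookup k \<in> U" using assms(1) unfolding upc_def by blast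
qed

lemma MI_least: "upc U \<Longrightarrow> T \<subseteq> MI U \<Longrightarrow> ideal_gen T \<subseteq> MI U"
  by (rule ig_least) (auto intro: MI_0 MI_add MI_mult)

lemma monom1_MI: "(monom1 \<beta> :: ('v, 'k::comm_ring_1) mpoly) \<in> MI U \<longleftrightarrow> Poly_Mapping.lookup \<beta> \<in> U"
  by (simp add: MI_def monom1_def)

definition upcl :: "('v \<Rightarrow>\<^sub>0 nat) set \<Rightarrow> ('v \<Rightarrow> nat) set" where
  "upcl A = {f. \<exists>\<alpha>\<in>A. Poly_Mapping.lookup \<alpha> \<le> f}"

lemma upc_upcl: "upc (upcl A)"
  unfolding upc_def upcl_def using order_trans by blast

lemma ig_monom_MI: "ideal_gen (monom1 ` A :: ('v, 'k::comm_ring_1) mpoly set) = MI (upcl A)"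
proof
  show "ideal_gen (monom1 ` A) \<subseteq> (MI (upcl A) :: ('v, 'k) mpoly set)"
    by (rule MI_least[OF upc_upcl]) (auto simp: monom1_MI upcl_def)
next
  show "MI (upcl A) \<subseteq> (ideal_gen (monom1 ` A) :: ('v, 'k) mpoly set)"
  proof
    fix p :: "('v, 'k) mpoly" assume p: "p \<in> MI (upcl A)"
    have S: "(\<Sum>\<beta>\<in>Poly_Mapping.keys p. Poly_Mapping.single \<beta> (Poly_Mapping.lookup p \<beta>)) \<in> ideal_gen (monom1 ` A)"
    proof (rule ig_sum)
      fix \<beta> assume b: "\<beta> \<in> Poly_Mapping.keys p"
      then obtain \<alpha> where a: "\<alpha> \<in> A" "Poly_Mapping.lookup \<alpha> \<le> Poly_Mapping.lookup \<beta>"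
        using p unfolding MI_def upcl_def by blast
      have eq: "(\<beta> - \<alpha>) + \<alpha> = \<beta>"
        using a(2) by (intro poly_mapping_eqI) (simp add: lookup_add lookup_minus le_fun_def)
      have e2: "Poly_Mapping.single \<beta> (Poly_Mapping.lookup p \<beta>) = Poly_Mapping.single (\<beta> - \<alpha>) (Poly_Mapping.lookup p \<beta>) * monom1 \<alpha>"
        by (simp add: monom1_def mult_single eq)
      have "monom1 \<alpha> \<in> ideal_gen (monom1 ` A)" using a(1) by (auto intro: ig_base)
      then have "Poly_Mapping.single (\<beta> - \<alpha>) (Poly_Mapping.lookup p \<beta>) * monom1 \<alpha> \<in> ideal_gen (monom1 ` A)"
        by (rule ig_mult)
      then show "Poly_Mapping.single \<beta> (Poly_Mapping.lookup p \<beta>) \<in> ideal_gen (monom1 ` A)"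
        using e2 by simp
    qed simp
    show "p \<in> ideal_gen (monom1 ` A)" using S poly_expand[of p] by simp
  qed
qed

lemma lookup_surj: "\<exists>\<beta>::('v::finite \<Rightarrow>\<^sub>0 nat). Poly_Mapping.lookup \<beta> = f"
  by (rule exI[of _ "Abs_poly_mapping f"]) simp

lemma MI_inj:
  assumes "(MI U :: ('v::finite, 'k::comm_ring_1) mpoly set) = MI V" shows "U = V"
proof -
  have "f \<in> U \<longleftrightarrow> f \<in> V" for f
  proof -
    obtain \<beta> :: "'v \<Rightarrow>\<^sub>0 nat" where "Poly_Mapping.lookup \<beta> = f" using lookup_surj by blast
    then have "f \<in> U \<longleftrightarrow> (monom1 \<beta> :: ('v, 'k) mpoly) \<in> MI U"
      and "f \<in> V \<longleftrightarrow> (monom1 \<beta> :: ('v, 'k) mpoly) \<in> MI V"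
      using monom1_MI[of \<beta> U, where 'k='k] monom1_MI[of \<beta> V, where 'k='k] by simp_all
    then show ?thesis unfolding assms by simp
  qed
  then show ?thesis by blast
qed

lemma colon_MI:
  "colon (MI U :: ('v, 'k::comm_ring_1) mpoly set) (monom1 \<gamma>) = MI {f. f + Poly_Mapping.lookup \<gamma> \<in> U}"
proof -
  have "g * monom1 \<gamma> \<in> MI U \<longleftrightarrow> g \<in> MI {f. f + Poly_Mapping.lookup \<gamma> \<in> U}" for g :: "('v, 'k) mpoly"
    unfolding MI_def monom1_def by (auto simp: keys_mult_single_shift lookup_add_fun)
  then show ?thesis unfolding colon_def by blast
qed

lemma upc_colon: "upc U \<Longrightarrow> upc {f. f + c \<in> U}"
  unfolding upc_def by (auto intro: add_right_mono)

definition pw :: "('v \<Rightarrow> nat) set \<Rightarrow> nat \<Rightarrow> ('v \<Rightarrow> nat) set" where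
  "pw U k = {f. \<exists>xs. length xs = k \<and> set xs \<subseteq> U \<and> sum_list xs \<le> f}"

lemma upc_pw: "upc (pw U k)"
  unfolding upc_def pw_def using order_trans by blast

lemma monom1_add: "monom1 (a + b) = (monom1 a * monom1 b :: ('v, 'k::comm_ring_1) mpoly)"
  by (simp add: monom1_def mult_single)

lemma prod_monom1: "prod_list (map monom1 xs) = (monom1 (sum_list xs) :: ('v, 'k::comm_ring_1) mpoly)"
  by (induction xs) (auto simp: monom1_add, simp add: monom1_def)

lemma MI_mult_step:
  assumes "p \<in> MI (pw U k)" "q \<in> MI U"
  shows "q * p \<in> MI (pw U (Suc k))"
  unfolding MI_def
proof (intro CollectI ballI)
  fix m assume "m \<in> Poly_Mapping.keys (q * p)"
  then obtain a b where ab: "m = a + b" "a \<in> Poly_Mapping.keys q" "b \<in> Poly_Mapping.keys p" using keys_mult by blast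
  have "Poly_Mapping.lookup a \<in> U" using assms(2) ab unfolding MI_def by blast
  moreover obtain xs where xs: "length xs = k" "set xs \<subseteq> U" "sum_list xs \<le> Poly_Mapping.lookup b"
    using assms(1) ab unfolding MI_def pw_def by blast
  ultimately show "Poly_Mapping.lookup m \<in> pw U (Suc k)"
    unfolding pw_def ab lookup_add_fun
    by (intro CollectI exI[of _ "Poly_Mapping.lookup a # xs"]) (auto intro: add_left_mono)
qed

lemma prod_list_MI_pw:
  "set ys \<subseteq> MI U \<Longrightarrow> prod_list ys \<in> (MI (pw U (length ys)) :: ('v, 'k::comm_ring_1) mpoly set)"
proof (induction ys)
  case Nil
  have "(1::('v, 'k) mpoly) = monom1 0" by (simp add: monom1_def)
  moreover have "Poly_Mapping.lookup (0::'v \<Rightarrow>\<^sub>0 nat) \<in> pw U 0" by (auto simp: pw_def)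
  ultimately show ?case using monom1_MI[of "0::'v \<Rightarrow>\<^sub>0 nat" "pw U 0", where 'k='k] by simp
next
  case (Cons y ys) then show ?case using MI_mult_step by auto
qed

lemma ideal_pow_MI:
  fixes U :: "('v::finite \<Rightarrow> nat) set"
  assumes "upc U"
  shows "ideal_pow (MI U :: ('v, 'k::comm_ring_1) mpoly set) k = MI (pw U k)"
proof
  have "{prod_list xs |xs. length xs = k \<and> set xs \<subseteq> (MI U :: ('v, 'k) mpoly set)} \<subseteq> MI (pw U k)"
  proof
    fix x assume "x \<in> {prod_list xs |xs. length xs = k \<and> set xs \<subseteq> (MI U :: ('v, 'k) mpoly set)}"
    then obtain xs where "x = prod_list xs" "length xs = k" "set xs \<subseteq> (MI U :: ('v, 'k) mpoly set)" by blast
    then show "x \<in> MI (pw U k)" using prod_list_MI_pw[of xs U] by simp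
  qed
  then show "ideal_pow (MI U :: ('v, 'k) mpoly set) k \<subseteq> MI (pw U k)"
    unfolding ideal_pow_def by (rule MI_least[OF upc_pw])
next
  have up: "upcl {\<beta>. Poly_Mapping.lookup \<beta> \<in> pw U k} = pw U k"
  proof (rule set_eqI, rule iffI)
    fix f assume "f \<in> upcl {\<beta>. Poly_Mapping.lookup \<beta> \<in> pw U k}"
    then show "f \<in> pw U k" using upc_pw[of U k] unfolding upcl_def upc_def by blast
  next
    fix f assume f: "f \<in> pw U k"
    obtain \<beta> :: "'v \<Rightarrow>\<^sub>0 nat" where "Poly_Mapping.lookup \<beta> = f" using lookup_surj by blast
    then show "f \<in> upcl {\<beta>. Poly_Mapping.lookup \<beta> \<in> pw U k}" using f unfolding upcl_def by auto
  qed
  have A: "MI (pw U k) = ideal_gen (monom1 ` {\<beta>. Poly_Mapping.lookup \<beta> \<in> pw U k} :: ('v, 'k) mpoly set)"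
    by (simp only: ig_monom_MI up)
  have B: "monom1 ` {\<beta>. Poly_Mapping.lookup \<beta> \<in> pw U k} \<subseteq> ideal_pow (MI U :: ('v, 'k) mpoly set) k"
  proof
    fix m :: "('v, 'k) mpoly" assume "m \<in> monom1 ` {\<beta>. Poly_Mapping.lookup \<beta> \<in> pw U k}"
    then obtain \<beta> where m: "m = monom1 \<beta>" and "Poly_Mapping.lookup \<beta> \<in> pw U k" by blast
    then obtain xs where xs: "length xs = k" "set xs \<subseteq> U" "sum_list xs \<le> Poly_Mapping.lookup \<beta>"
      unfolding pw_def by blast
    define ys :: "('v \<Rightarrow>\<^sub>0 nat) list" where "ys = map Abs_poly_mapping xs"
    have ly: "map Poly_Mapping.lookup ys = xs" unfolding ys_def by (simp add: comp_def)
    have sl: "Poly_Mapping.lookup (sum_list ys) = sum_list xs"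
      unfolding ly[symmetric] by (induction ys) (auto simp: lookup_add_fun)
    have eq: "(\<beta> - sum_list ys) + sum_list ys = \<beta>"
      using xs(3) sl by (intro poly_mapping_eqI) (simp add: lookup_add lookup_minus le_fun_def)
    have "(monom1 \<beta> :: ('v, 'k) mpoly) = monom1 ((\<beta> - sum_list ys) + sum_list ys)" by (simp only: eq)
    also have "\<dots> = monom1 (\<beta> - sum_list ys) * monom1 (sum_list ys)" by (rule monom1_add)
    also have "\<dots> = monom1 (\<beta> - sum_list ys) * prod_list (map monom1 ys)" by (simp only: prod_monom1)
    finally have m2: "(monom1 \<beta> :: ('v, 'k) mpoly) = monom1 (\<beta> - sum_list ys) * prod_list (map monom1 ys)" .
    have pl: "prod_list (map monom1 ys) \<in> {prod_list xs |xs. length xs = k \<and> set xs \<subseteq> (MI U :: ('v, 'k) mpoly set)}"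
    proof -
      have "Poly_Mapping.lookup y \<in> U" if "y \<in> set ys" for y
      proof -
        have "Poly_Mapping.lookup y \<in> set (map Poly_Mapping.lookup ys)" using that by simp
        then show ?thesis using xs(2) ly by auto
      qed
      then have "set (map monom1 ys) \<subseteq> (MI U :: ('v, 'k) mpoly set)" by (auto simp: monom1_MI)
      moreover have "length (map monom1 ys) = k" using xs(1) by (simp add: ys_def)
      ultimately show ?thesis by blast
    qed
    have "prod_list (map monom1 ys) \<in> ideal_pow (MI U :: ('v, 'k) mpoly set) k"
      unfolding ideal_pow_def by (rule ig_base[OF pl])
    then have "monom1 (\<beta> - sum_list ys) * prod_list (map monom1 ys) \<in> ideal_pow (MI U :: ('v, 'k) mpoly set) k"
      unfolding ideal_pow_def by (rule ig_mult)
    then show "m \<in> ideal_pow (MI U :: ('v, 'k) mpoly set) k" using m m2 by simp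
  qed
  show "MI (pw U k) \<subseteq> ideal_pow (MI U :: ('v, 'k) mpoly set) k"
    unfolding A using ig_sub[OF B[unfolded ideal_pow_def]] unfolding ideal_pow_def .
qed



definition ind :: "'v set \<Rightarrow> 'v \<Rightarrow> nat" where
  "ind e = (\<lambda>v. if v \<in> e then 1 else 0)"

definition dl :: "'v \<Rightarrow> 'v \<Rightarrow> nat" where
  "dl x = (\<lambda>v. if v = x then 1 else 0)"

definition vs :: "'v set multiset \<Rightarrow> 'v \<Rightarrow> nat" where
  "vs M = sum_mset (image_mset ind M)"

definition inM :: "'v set set \<Rightarrow> nat \<Rightarrow> ('v \<Rightarrow> nat) \<Rightarrow> bool" where
  "inM E k f \<longleftrightarrow> (\<exists>F. size F = k \<and> set_mset F \<subseteq> E \<and> vs F \<le> f)"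

lemma vs_empty [simp]: "vs {#} = 0" by (simp add: vs_def)
lemma vs_add [simp]: "vs (A + B) = vs A + vs B" by (simp add: vs_def)
lemma vs_add_mset [simp]: "vs (add_mset e A) = ind e + vs A" by (simp add: vs_def)

lemma sum_mset_apply: "(sum_mset M :: 'a \<Rightarrow> nat) v = sum_mset (image_mset (\<lambda>f. f v) M)"
  by (induction M) auto

lemma ind_pair: "x \<noteq> y \<Longrightarrow> ind {x, y} = dl x + dl y"
  by (auto simp: ind_def dl_def fun_eq_iff)

lemma inM_add: "inM E k f \<Longrightarrow> inM E l g \<Longrightarrow> inM E (k + l) (f + g)"
  unfolding inM_def
proof (elim exE conjE)
  fix F G assume "size F = k" "set_mset F \<subseteq> E" "vs F \<le> f" "size G = l" "set_mset G \<subseteq> E" "vs G \<le> g"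
  then show "\<exists>H. size H = k + l \<and> set_mset H \<subseteq> E \<and> vs H \<le> f + g"
    by (intro exI[of _ "F + G"]) (auto intro: add_mono)
qed

lemma inM_mono: "inM E k f \<Longrightarrow> f \<le> g \<Longrightarrow> inM E k g"
  unfolding inM_def using order_trans by blast

lemma inM_edge: "e \<in> E \<Longrightarrow> inM E 1 (ind e)"
  unfolding inM_def by (intro exI[of _ "{#e#}"]) auto

lemma inM_vs: "set_mset F \<subseteq> E \<Longrightarrow> inM E (size F) (vs F)"
  unfolding inM_def by blast

type_synonym 'v tok = "'v \<times> 'v \<times> 'v option \<times> 'v set multiset \<times> 'v set multiset"

definition e1 :: "'v tok \<Rightarrow> 'v" where "e1 t = fst t"
definition e2 :: "'v tok \<Rightarrow> 'v" where "e2 t = fst (snd t)"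
definition used :: "'v tok \<Rightarrow> 'v set multiset" where "used t = fst (snd (snd (snd t))) + snd (snd (snd (snd t)))"

lemma tok_simps [simp]: "e1 (u, v, k, A, B) = u" "e2 (u, v, k, A, B) = v" "used (u, v, k, A, B) = A + B"
  by (simp_all add: e1_def e2_def used_def)

definition ep :: "'v tok \<Rightarrow> 'v \<Rightarrow> nat" where
  "ep t = dl (e1 t) + dl (e2 t)"

locale ctx =
  fixes E :: "'v set set" and a b :: 'v and Pm :: "'v set multiset"
  assumes sg: "\<And>e. e \<in> E \<Longrightarrow> card e = 2"
    and abE: "{a, b} \<in> E" and ab: "a \<noteq> b"
    and PmE: "set_mset Pm \<subseteq> E"
    and H: "\<And>x. \<not> inM E (size Pm + 2) (dl x + dl x + vs Pm + ind {a, b})"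
begin

definition oth :: "'v \<Rightarrow> 'v" where "oth x = (if x = a then b else a)"

definition conn :: "'v set multiset \<Rightarrow> 'v \<Rightarrow> 'v \<Rightarrow> bool" where
  "conn U x y \<longleftrightarrow> inM E (size U + 1) (dl x + dl y + vs U)"

lemma conn_sym: "conn U x y \<Longrightarrow> conn U y x"
  unfolding conn_def by (simp add: add.commute add.left_commute)

fun valid :: "'v tok \<Rightarrow> bool" where
  "valid (u, v, None, A, B) = conn A u v"
| "valid (u, v, Some x, A, B) = (x \<in> {a, b} \<and> conn A u x \<and> conn B (oth x) v)"

fun flp :: "'v tok \<Rightarrow> 'v tok" where
  "flp (u, v, None, A, B) = (v, u, None, A, B)"
| "flp (u, v, Some x, A, B) = (v, u, Some (oth x), B, A)"

lemma oth_oth: "x \<in> {a, b} \<Longrightarrow> oth (oth x) = x"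
  using ab by (auto simp: oth_def)

lemma oth_in: "oth x \<in> {a, b}" by (simp add: oth_def)

lemma flp_props: "valid t \<Longrightarrow> valid (flp t)" "used (flp t) = used t" "e1 (flp t) = e2 t" "e2 (flp t) = e1 t"
    "ep (flp t) = ep t"
  subgoal by (cases t rule: flp.cases) (auto simp: oth_oth oth_in conn_sym oth_def)
  subgoal by (cases t rule: flp.cases) auto
  subgoal by (cases t rule: flp.cases) auto
  subgoal by (cases t rule: flp.cases) auto
  subgoal by (cases t rule: flp.cases) (auto simp: ep_def add.commute)
  done

lemma edge2: "e \<in> E \<Longrightarrow> \<exists>w w'. e = {w, w'} \<and> w \<noteq> w'"
  using sg[of e] by (auto simp: card_2_iff)

lemma conn_join:
  assumes "conn A p w" "conn B w' q" "{w, w'} \<in> E" "w \<noteq> w'"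
  shows "conn (A + add_mset {w, w'} B) p q"
proof -
  have "inM E ((size A + 1) + (size B + 1)) ((dl p + dl w + vs A) + (dl w' + dl q + vs B))"
    using assms(1,2) unfolding conn_def by (rule inM_add)
  moreover have "(dl p + dl w + vs A) + (dl w' + dl q + vs B) = dl p + dl q + vs (A + add_mset {w, w'} B)"
    using assms(4) by (simp add: ind_pair algebra_simps)
  ultimately show ?thesis unfolding conn_def by simp
qed

lemma noloop:
  assumes "conn U y y" "U \<subseteq># Pm" shows False
proof -
  have "inM E ((size U + 1) + (size (Pm - U) + 1)) ((dl y + dl y + vs U) + (vs (Pm - U) + ind {a, b}))"
  proof (rule inM_add)
    show "inM E (size U + 1) (dl y + dl y + vs U)" using assms(1) unfolding conn_def .
    have "set_mset (Pm - U + {#{a,b}#}) \<subseteq> E" using PmE abE by (auto dest: in_diffD)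
    then have "inM E (size (Pm - U + {#{a,b}#})) (vs (Pm - U + {#{a,b}#}))" by (rule inM_vs)
    then show "inM E (size (Pm - U) + 1) (vs (Pm - U) + ind {a, b})" by (simp add: add.commute)
  qed
  moreover have "size U + 1 + (size (Pm - U) + 1) = size Pm + 2"
  proof -
    have "size U + size (Pm - U) = size Pm" using assms(2) by (metis size_union subset_mset.add_diff_inverse)
    then show ?thesis by simp
  qed
  moreover have "(dl y + dl y + vs U) + (vs (Pm - U) + ind {a, b}) = dl y + dl y + vs Pm + ind {a, b}"
  proof -
    have h: "vs U + vs (Pm - U) = vs Pm" using assms(2) by (metis subset_mset.add_diff_inverse vs_add)
    have "(dl y + dl y + vs U) + (vs (Pm - U) + ind {a, b}) = dl y + dl y + (vs U + vs (Pm - U)) + ind {a, b}"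
      by (simp add: add.assoc)
    then show ?thesis using h by simp
  qed
  ultimately show False using H[of y] by simp
qed

lemma ext_Pm:
  assumes "inM E k f" "U \<subseteq># Pm"
  shows "inM E (k + size (Pm - U)) (f + vs (Pm - U))"
proof (rule inM_add[OF assms(1)])
  have "set_mset (Pm - U) \<subseteq> E" using PmE by (auto dest: in_diffD)
  then show "inM E (size (Pm - U)) (vs (Pm - U))" by (rule inM_vs)
qed

lemma vs_split: "U \<subseteq># Pm \<Longrightarrow> vs U + vs (Pm - U) = vs Pm"
  by (metis subset_mset.add_diff_inverse vs_add)

lemma size_split: "U \<subseteq># Pm \<Longrightarrow> size U + size (Pm - U) = size Pm"
  by (metis size_union subset_mset.add_diff_inverse)

lemma ind_ab: "ind {a, b} = dl a + dl b" using ab by (rule ind_pair)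

lemma dl_oth: "x \<in> {a, b} \<Longrightarrow> dl x + dl (oth x) = ind {a, b}"
  using ab by (auto simp: oth_def ind_ab add.commute)

lemma final:
  assumes "valid t" "used t \<subseteq># Pm" "ep t \<le> \<beta>"
  shows "inM E (size Pm + 2) (\<beta> + vs Pm + ind {a, b})"
proof -
  obtain u v k A B where t: "t = (u, v, k, A, B)" by (cases t) auto
  show ?thesis
  proof (cases k)
    case None
    then have c: "conn A u v" using assms(1) t by simp
    have "A + B \<subseteq># Pm" using assms(2) t by simp
    then have AP: "A \<subseteq># Pm" by (metis mset_subset_eq_add_left subset_mset.order_trans)
    have "inM E ((size A + 1) + size (Pm - A) + 1) ((dl u + dl v + vs A) + vs (Pm - A) + ind {a, b})"
      using inM_add[OF ext_Pm[OF c[unfolded conn_def] AP] inM_edge[OF abE]] .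
    moreover have "(size A + 1) + size (Pm - A) + 1 = size Pm + 2" using size_split[OF AP] by simp
    moreover have "(dl u + dl v + vs A) + vs (Pm - A) + ind {a, b} = ep t + vs Pm + ind {a, b}"
      using vs_split[OF AP] t by (simp add: ep_def algebra_simps)
    moreover have "ep t + vs Pm + ind {a, b} \<le> \<beta> + vs Pm + ind {a, b}" using assms(3) by (simp add: add_right_mono)
    ultimately show ?thesis using inM_mono by metis
  next
    case (Some x)
    then have c: "x \<in> {a, b}" "conn A u x" "conn B (oth x) v" using assms(1) t by auto
    have AP: "A + B \<subseteq># Pm" using assms(2) t by simp
    have "inM E ((size A + 1) + (size B + 1) + size (Pm - (A + B))) ((dl u + dl x + vs A) + (dl (oth x) + dl v + vs B) + vs (Pm - (A + B)))"
      using ext_Pm[OF inM_add[OF c(2)[unfolded conn_def] c(3)[unfolded conn_def]] AP] .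
    moreover have "(size A + 1) + (size B + 1) + size (Pm - (A + B)) = size Pm + 2" using size_split[OF AP] by simp
    moreover have "(dl u + dl x + vs A) + (dl (oth x) + dl v + vs B) + vs (Pm - (A + B)) = ep t + vs Pm + ind {a, b}"
    proof -
      have "(dl u + dl x + vs A) + (dl (oth x) + dl v + vs B) + vs (Pm - (A + B)) = (dl u + dl v) + (dl x + dl (oth x)) + (vs (A + B) + vs (Pm - (A + B)))"
        by (simp add: algebra_simps)
      also have "\<dots> = ep t + vs Pm + ind {a, b}" using vs_split[OF AP] dl_oth[OF c(1)] t by (simp add: ep_def algebra_simps)
      finally show ?thesis .
    qed
    moreover have "ep t + vs Pm + ind {a, b} \<le> \<beta> + vs Pm + ind {a, b}" using assms(3) by (simp add: add_right_mono)
    ultimately show ?thesis using inM_mono by metis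
  qed
qed

lemma merge:
  assumes "valid t1" "valid t2" "e2 t1 = w" "e1 t2 = w'" "{w, w'} \<in> E" "w \<noteq> w'"
    and "used t1 + used t2 + {#{w, w'}#} \<subseteq># Pm"
  shows "\<exists>t. valid t \<and> used t \<subseteq># used t1 + used t2 + {#{w, w'}#} \<and> ep t + ind {w, w'} = ep t1 + ep t2"
proof -
  obtain u k1 A1 B1 where t1: "t1 = (u, w, k1, A1, B1)" using assms(3) by (cases t1) auto
  obtain v k2 A2 B2 where t2: "t2 = (w', v, k2, A2, B2)" using assms(4) by (cases t2) auto
  have epq: "ep (u, v, k, A, B) + ind {w, w'} = ep t1 + ep t2" for k A B
  proof -
    have "ep (u, v, k, A, B) + ind {w, w'} = dl u + dl v + (dl w + dl w')"
      using assms(6) by (simp add: ep_def ind_pair)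
    also have "\<dots> = (dl u + dl w) + (dl w' + dl v)" by (simp add: algebra_simps)
    also have "\<dots> = ep t1 + ep t2" using t1 t2 by (simp add: ep_def)
    finally show ?thesis .
  qed
  have ex: "\<exists>t. valid t \<and> used t \<subseteq># used t1 + used t2 + {#{w, w'}#} \<and> ep t + ind {w, w'} = ep t1 + ep t2"
    if "valid (u, v, k, A, B)" "used (u, v, k, A, B) \<subseteq># used t1 + used t2 + {#{w, w'}#}" for k A B
    using that epq[of k A B] by (intro exI[of _ "(u, v, k, A, B)"]) simp
  show ?thesis
  proof (cases k1)
    case None
    then have c1: "conn A1 u w" using assms(1) t1 by simp
    show ?thesis
    proof (cases k2)
      case None
      then have c2: "conn A2 w' v" using assms(2) t2 by simp
      have "valid (u, v, None, A1 + add_mset {w, w'} A2, {#})" using conn_join[OF c1 c2 assms(5,6)] by simp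
      moreover have "used (u, v, None, A1 + add_mset {w, w'} A2, {#}) \<subseteq># used t1 + used t2 + {#{w, w'}#}"
        using t1 t2 by (simp add: subset_mset.add_mono)
      ultimately show ?thesis by (rule ex)
    next
      case (Some x)
      then have c2: "x \<in> {a, b}" "conn A2 w' x" "conn B2 (oth x) v" using assms(2) t2 by auto
      have "valid (u, v, Some x, A1 + add_mset {w, w'} A2, B2)" using conn_join[OF c1 c2(2) assms(5,6)] c2 by simp
      moreover have "used (u, v, Some x, A1 + add_mset {w, w'} A2, B2) \<subseteq># used t1 + used t2 + {#{w, w'}#}"
        using t1 t2 by (simp add: subset_mset.add_mono)
      ultimately show ?thesis by (rule ex)
    qed
  next
    case (Some x)
    then have c1: "x \<in> {a, b}" "conn A1 u x" "conn B1 (oth x) w" using assms(1) t1 by auto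
    show ?thesis
    proof (cases k2)
      case None
      then have c2: "conn A2 w' v" using assms(2) t2 by simp
      have "valid (u, v, Some x, A1, B1 + add_mset {w, w'} A2)" using conn_join[OF c1(3) c2 assms(5,6)] c1 by simp
      moreover have "used (u, v, Some x, A1, B1 + add_mset {w, w'} A2) \<subseteq># used t1 + used t2 + {#{w, w'}#}"
        using t1 t2 by (simp add: subset_mset.add_mono)
      ultimately show ?thesis by (rule ex)
    next
      case (Some x')
      then have c2: "x' \<in> {a, b}" "conn A2 w' x'" "conn B2 (oth x') v" using assms(2) t2 by auto
      show ?thesis
      proof (cases "x' = x")
        case True
        have "valid (u, v, Some x, A1, B2)" using c1 c2 True by simp
        moreover have "used (u, v, Some x, A1, B2) \<subseteq># used t1 + used t2 + {#{w, w'}#}"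
          using t1 t2 by (simp add: subset_mset.add_mono)
        ultimately show ?thesis by (rule ex)
      next
        case False
        then have "x' = oth x" using c1(1) c2(1) ab by (auto simp: oth_def)
        then have "conn (B1 + add_mset {w, w'} A2) (oth x) (oth x)" using conn_join[OF c1(3) c2(2) assms(5,6)] by simp
        moreover have "B1 + add_mset {w, w'} A2 \<subseteq># Pm"
        proof -
          have "B1 + add_mset {w, w'} A2 \<subseteq># used t1 + used t2 + {#{w, w'}#}" using t1 t2
            by (simp add: subset_mset.add_mono)
          then show ?thesis using assms(7) by (rule subset_mset.order_trans)
        qed
        ultimately show ?thesis using noloop by blast
      qed
    qed
  qed
qed

end


definition TT :: "'v tok multiset \<Rightarrow> 'v \<Rightarrow> nat" where "TT ts = sum_mset (image_mset ep ts)"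
definition UT :: "'v tok multiset \<Rightarrow> 'v set multiset" where "UT ts = sum_mset (image_mset used ts)"

lemma TT_empty [simp]: "TT {#} = 0" by (simp add: TT_def)
lemma UT_empty [simp]: "UT {#} = {#}" by (simp add: UT_def)
lemma TT_add [simp]: "TT (add_mset t ts) = ep t + TT ts" by (simp add: TT_def)
lemma UT_add [simp]: "UT (add_mset t ts) = used t + UT ts" by (simp add: UT_def)

lemma ep_pos: "ep t z > 0 \<longleftrightarrow> e1 t = z \<or> e2 t = z"
  by (auto simp: ep_def dl_def)

lemma TT_apply: "TT ts z = sum_mset (image_mset (\<lambda>t. ep t z) ts)"
  by (induction ts) auto

lemma pos_mem: "TT ts z > 0 \<Longrightarrow> \<exists>t\<in>#ts. ep t z > 0"
  by (induction ts) auto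

lemma TT_zero: "(\<And>t. t \<in># ts \<Longrightarrow> ep t z = 0) \<Longrightarrow> TT ts z = 0"
  by (induction ts) auto

lemma mem_le_TT: "t \<in># ts \<Longrightarrow> ep t \<le> TT ts"
proof -
  assume "t \<in># ts"
  then obtain ts' where "ts = add_mset t ts'" by (metis multi_member_split)
  then show ?thesis by (simp add: le_fun_def)
qed

lemma mem_le_UT: "t \<in># ts \<Longrightarrow> used t \<subseteq># UT ts"
proof -
  assume "t \<in># ts"
  then obtain ts' where "ts = add_mset t ts'" by (metis multi_member_split)
  then show ?thesis by simp
qed

context ctx begin

lemma chain:
  "\<And>ts. (\<forall>t\<in>#ts. valid t) \<Longrightarrow> fs + UT ts \<subseteq># Pm \<Longrightarrow> size fs < size ts \<Longrightarrow> TT ts \<le> \<beta> + vs fs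
    \<Longrightarrow> \<exists>t. valid t \<and> used t \<subseteq># Pm \<and> ep t \<le> \<beta>"
proof (induction fs)
  case empty
  then have "ts \<noteq> {#}" by auto
  then obtain t where t: "t \<in># ts" by (rule multiset_nonemptyE)
  have "ep t \<le> \<beta>" using mem_le_TT[OF t] empty.prems(4) by simp
  moreover have "used t \<subseteq># Pm" using mem_le_UT[OF t] empty.prems(2) by (simp add: subset_mset.order_trans)
  ultimately show ?case using empty.prems(1) t by blast
next
  case (add e fs)
  define D where "D = \<beta> + vs fs"
  note val = add.prems(1) and sub = add.prems(2) and sz = add.prems(3)
  have "e \<in># add_mset e fs + UT ts" by simp
  then have eP: "e \<in># Pm" using mset_subset_eqD[OF sub] by blast
  hence "e \<in> E" using PmE by blast
  then obtain w w' where e: "e = {w, w'}" "w \<noteq> w'" using edge2 by blast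
  have ie: "ind e = dl w + dl w'" using e by (simp add: ind_pair)
  have eqD: "\<beta> + vs (add_mset e fs) = D + ind e" unfolding D_def vs_add_mset by (simp only: ac_simps)
  have le: "TT ts \<le> D + ind e" using add.prems(4) unfolding eqD .
  have lev: "TT ts v \<le> D v + dl w v + dl w' v" for v using le ie by (auto simp: le_fun_def add.assoc)
  have drop: "\<exists>t. valid t \<and> used t \<subseteq># Pm \<and> ep t \<le> \<beta>"
    if ts': "\<forall>t\<in>#ts'. valid t" "fs + UT ts' \<subseteq># add_mset e fs + UT ts" "size ts' + 1 \<ge> size ts" "TT ts' \<le> D" for ts'
  proof (rule add.IH)
    show "\<forall>t\<in>#ts'. valid t" by fact
    show "fs + UT ts' \<subseteq># Pm" using ts'(2) sub by (rule subset_mset.order_trans)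
    show "size fs < size ts'" using sz ts'(3) by simp
    show "TT ts' \<le> \<beta> + vs fs" using ts'(4) by (simp add: D_def)
  qed
  have dropsub: "fs + UT ts' \<subseteq># add_mset e fs + UT ts" if "UT ts' \<subseteq># X" "UT ts = X + Y" for ts' X Y
  proof -
    have "fs + UT ts' \<subseteq># fs + X" using that(1) by (rule subset_mset.add_left_mono)
    also have "fs + X \<subseteq># fs + (X + Y)" by simp
    also have "fs + (X + Y) \<subseteq># add_mset e fs + (X + Y)" by simp
    finally show ?thesis using that(2) by simp
  qed
  show ?case
  proof (cases "TT ts \<le> D")
    case True
    then show ?thesis using drop[of ts] dropsub[of ts "UT ts" "{#}"] val by simp
  next
    case notA: False
    have caseB: "\<exists>t. valid t \<and> used t \<subseteq># Pm \<and> ep t \<le> \<beta>" if z: "z = w \<or> z = w'" and B: "TT ts \<le> D + dl z" for z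
    proof -
      obtain v where v: "TT ts v > D v" using notA by (auto simp: le_fun_def not_le)
      have "TT ts v \<le> D v + dl z v" using B by (simp add: le_fun_def)
      then have "v = z" using v by (cases "v = z") (auto simp: dl_def)
      then have "TT ts z > 0" using v by simp
      then have "\<exists>t\<in>#ts. ep t z > 0" by (rule pos_mem)
      then obtain t where t: "t \<in># ts" "ep t z > 0" by auto
      then obtain ts' where ts': "ts = add_mset t ts'" by (metis multi_member_split)
      have "TT ts' \<le> D"
      proof (rule le_funI)
        fix x
        have "TT ts x = ep t x + TT ts' x" using ts' by simp
        moreover have "TT ts x \<le> D x + dl z x" using B by (simp add: le_fun_def)
        ultimately show "TT ts' x \<le> D x" using t(2) by (cases "x = z") (auto simp: dl_def)
      qed
      then show ?thesis using drop[of ts'] dropsub[of ts' "UT ts'" "used t"] val ts' by (simp add: add.commute)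
    qed
    show ?thesis
    proof (cases "TT ts \<le> D + dl w")
      case True then show ?thesis using caseB by blast
    next
      case nB: False
      show ?thesis
      proof (cases "TT ts \<le> D + dl w'")
        case True then show ?thesis using caseB by blast
      next
        case nC: False
        obtain v where v: "TT ts v > D v + dl w v" using nB by (auto simp: le_fun_def not_le)
        have "v = w'" using v lev[of v] by (cases "v = w'") (auto simp: dl_def)
        then have Tw': "TT ts w' > 0" using v by simp
        obtain v' where v': "TT ts v' > D v' + dl w' v'" using nC by (auto simp: le_fun_def not_le)
        have "v' = w" using v' lev[of v'] by (cases "v' = w") (auto simp: dl_def)
        then have Tw: "TT ts w > 0" using v' by simp
        have "\<exists>t\<in>#ts. ep t w > 0" using Tw by (rule pos_mem)
        then obtain t1 where t1: "t1 \<in># ts" "ep t1 w > 0" by auto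
        then obtain ts1 where ts1: "ts = add_mset t1 ts1" by (metis multi_member_split)
        show ?thesis
        proof (cases "\<exists>t2\<in>#ts1. ep t2 w' > 0")
          case True
          then obtain t2 where t2: "t2 \<in># ts1" "ep t2 w' > 0" by blast
          then obtain ts2 where ts2: "ts1 = add_mset t2 ts2" by (metis multi_member_split)
          define t1' where "t1' = (if e2 t1 = w then t1 else flp t1)"
          define t2' where "t2' = (if e1 t2 = w' then t2 else flp t2)"
          have v1: "valid t1'" "used t1' = used t1" "e2 t1' = w" "ep t1' = ep t1"
            using t1 val ts1 flp_props[of t1] ep_pos[of t1 w] by (auto simp: t1'_def)
          have v2: "valid t2'" "used t2' = used t2" "e1 t2' = w'" "ep t2' = ep t2"
            using t2 val ts1 ts2 flp_props[of t2] ep_pos[of t2 w'] by (auto simp: t2'_def)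
          have UTs: "UT ts = (used t1 + used t2) + UT ts2" using ts1 ts2 by (simp add: union_assoc)
          have "used t1 + used t2 + {#{w, w'}#} \<subseteq># add_mset e fs + UT ts"
            using UTs e by (simp add: subset_mset.add_mono union_commute union_assoc)
          then have "used t1' + used t2' + {#{w, w'}#} \<subseteq># Pm" using sub v1 v2 by (metis subset_mset.order_trans)
          then obtain t where t: "valid t" "used t \<subseteq># used t1 + used t2 + {#{w, w'}#}" "ep t + ind {w, w'} = ep t1 + ep t2"
            using merge[OF v1(1) v2(1) v1(3) v2(3) _ e(2)] \<open>e \<in> E\<close> e v1 v2 by auto
          have "TT (add_mset t ts2) + ind e = TT ts" using t(3) ts1 ts2 e by (simp add: algebra_simps)
          then have "TT (add_mset t ts2) \<le> D" using le by (metis add_le_cancel_right)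
          moreover have "fs + UT (add_mset t ts2) \<subseteq># add_mset e fs + UT ts"
          proof -
            have "fs + UT (add_mset t ts2) = fs + (used t + UT ts2)" by simp
            also have "\<dots> \<subseteq># fs + ((used t1 + used t2 + {#{w, w'}#}) + UT ts2)"
              using t(2) by (intro subset_mset.add_left_mono subset_mset.add_right_mono)
            also have "\<dots> = add_mset e fs + UT ts" using UTs e by simp
            finally show ?thesis .
          qed
          moreover have "\<forall>t\<in>#add_mset t ts2. valid t" using t(1) val ts1 ts2 by auto
          moreover have "size (add_mset t ts2) + 1 \<ge> size ts" using ts1 ts2 by simp
          ultimately show ?thesis using drop by blast
        next
          case False
          then have "TT ts1 w' = 0" by (intro TT_zero) auto
          then have "ep t1 w' > 0" using Tw' ts1 by simp
          then have "ep t1 = dl w + dl w'" using t1(2) e(2) ep_pos[of t1 w] ep_pos[of t1 w']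
            by (auto simp: ep_def add.commute)
          then have "TT ts1 + ind e = TT ts" using ts1 ie by (simp add: add.commute)
          then have "TT ts1 \<le> D" using le by (metis add_le_cancel_right)
          then show ?thesis using drop[of ts1] dropsub[of ts1 "UT ts1" "used t1"] val ts1 by (simp add: add.commute)
        qed
      qed
    qed
  qed
qed

end


context ctx begin

lemma conn_edge: "{p, q} \<in> E \<Longrightarrow> p \<noteq> q \<Longrightarrow> conn {#} p q"
  unfolding conn_def using inM_edge[of "{p, q}" E] by (simp add: ind_pair)

lemma classify:
  assumes "inM E 2 (r + ind {a, b})"
  shows "\<exists>t. valid t \<and> used t = {#} \<and> ep t \<le> r"
proof -
  obtain F where F: "size F = 2" "set_mset F \<subseteq> E" "vs F \<le> r + ind {a, b}" using assms unfolding inM_def by blast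
  obtain f g where fg: "F = {#f, g#}"
  proof -
    have "F \<noteq> {#}" using F(1) by auto
    then obtain f F1 where F1: "F = add_mset f F1" by (metis multi_nonempty_split)
    then have "size F1 = 1" using F(1) by simp
    then obtain g where "F1 = {#g#}" by (metis size_1_singleton_mset)
    then show ?thesis using that F1 by blast
  qed
  have fE: "f \<in> E" and gE: "g \<in> E" using F(2) fg by auto
  have pt: "ind f v + ind g v \<le> r v + ind {a, b} v" for v using F(3) fg by (auto simp: le_fun_def)
  have edge_tok: "\<exists>t. valid t \<and> used t = {#} \<and> ep t \<le> r" if hE: "h \<in> E" and hr: "ind h \<le> r" for h
  proof -
    obtain p q where pq: "h = {p, q}" "p \<noteq> q" using edge2[OF hE] by blast
    have "valid (p, q, None, {#}, {#})" using conn_edge hE pq by simp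
    moreover have "ep (p, q, None, {#}, {#}) \<le> r" using hr pq by (simp add: ep_def ind_pair)
    ultimately show ?thesis by (intro exI[of _ "(p, q, None, {#}, {#})"]) simp
  qed
  show ?thesis
  proof (cases "ind f \<le> r")
    case True then show ?thesis using edge_tok fE by blast
  next
    case nf: False
    show ?thesis
    proof (cases "ind g \<le> r")
      case True then show ?thesis using edge_tok gE by blast
    next
      case ng: False
      obtain z where z: "ind f z > r z" using nf by (auto simp: le_fun_def not_le)
      obtain z' where z': "ind g z' > r z'" using ng by (auto simp: le_fun_def not_le)
      have zf: "z \<in> f" "r z = 0" using z by (auto simp: ind_def split: if_splits)
      have zf': "z' \<in> g" "r z' = 0" using z' by (auto simp: ind_def split: if_splits)
      have zab: "z \<in> {a, b}" "z \<notin> g" using pt[of z] zf by (auto simp: ind_def split: if_splits)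
      have zab': "z' \<in> {a, b}" "z' \<notin> f" using pt[of z'] zf' by (auto simp: ind_def split: if_splits)
      have zz: "z \<noteq> z'" using zab zf' by auto
      obtain p x where fx: "f = {p, x}" "p \<noteq> x" using edge2[OF fE] by blast
      obtain x' where fx': "f = {z, x'}" "z \<noteq> x'" using fx zf by auto
      obtain y' where gy': "g = {z', y'}" "z' \<noteq> y'"
      proof -
        obtain p q where "g = {p, q}" "p \<noteq> q" using edge2[OF gE] by blast
        then show ?thesis using that zf' by auto
      qed
      have z'oth: "z' = oth z" using zab zab' zz ab by (auto simp: oth_def)
      have xab: "x' \<notin> {a, b}" using fx' zab zab' z'oth zz ab by (auto simp: oth_def)
      have yab: "y' \<notin> {a, b}" using gy' zab zab' z'oth zz ab by (auto simp: oth_def)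
      have rx: "r x' \<ge> 1 + (if x' = y' then 1 else 0)" using pt[of x'] fx' gy' xab by (auto simp: ind_def)
      have ry: "r y' \<ge> 1 + (if x' = y' then 1 else 0)" using pt[of y'] fx' gy' yab by (auto simp: ind_def)
      have "valid (x', y', Some z, {#}, {#})"
        using zab(1) conn_edge[of z x'] conn_edge[of z' y'] fE gE fx' gy' z'oth
        by (auto simp: conn_sym insert_commute)
      moreover have "ep (x', y', Some z, {#}, {#}) \<le> r"
        using rx ry by (auto simp: ep_def le_fun_def dl_def)
      ultimately show ?thesis by (intro exI[of _ "(x', y', Some z, {#}, {#})"]) simp
    qed
  qed
qed

lemma toks:
  "(\<forall>r\<in>set rs. inM E 2 (r + ind {a, b})) \<Longrightarrow>
   \<exists>ts. size ts = length rs \<and> (\<forall>t\<in>#ts. valid t) \<and> UT ts = {#} \<and> TT ts \<le> sum_list rs"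
proof (induction rs)
  case Nil then show ?case by (intro exI[of _ "{#}"]) simp
next
  case (Cons r rs)
  then obtain ts where ts: "size ts = length rs" "\<forall>t\<in>#ts. valid t" "UT ts = {#}" "TT ts \<le> sum_list rs" by auto
  have "inM E 2 (r + ind {a, b})" by (rule bspec[OF Cons.prems]) simp
  from classify[OF this] obtain t where t: "valid t" "used t = {#}" "ep t \<le> r" by blast
  have c4: "TT (add_mset t ts) \<le> sum_list (r # rs)" using add_mono[OF t(3) ts(4)] by simp
  have c1: "size (add_mset t ts) = length (r # rs)" using ts by simp
  have c2: "\<forall>t'\<in>#add_mset t ts. valid t'" using ts t by simp
  have c3: "UT (add_mset t ts) = {#}" using ts t by simp
  show ?case by (rule exI[of _ "add_mset t ts"]) (intro conjI c1 c2 c3 c4)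
qed

lemma KJ:
  assumes "sum_list rs \<le> \<beta> + vs Pm" "length rs = size Pm + 1" "\<forall>r\<in>set rs. inM E 2 (r + ind {a, b})"
  shows "inM E (size Pm + 2) (\<beta> + vs Pm + ind {a, b})"
proof -
  obtain ts where ts: "size ts = length rs" "\<forall>t\<in>#ts. valid t" "UT ts = {#}" "TT ts \<le> sum_list rs"
    using toks[OF assms(3)] by blast
  have "\<exists>t. valid t \<and> used t \<subseteq># Pm \<and> ep t \<le> \<beta>"
    by (rule chain[of ts Pm]) (use ts assms in \<open>auto intro: order_trans\<close>)
  then show ?thesis using final by blast
qed

end


lemma vs_pos: "vs F z > 0 \<Longrightarrow> \<exists>f\<in>#F. z \<in> f"
  by (induction F) (auto simp: ind_def split: if_splits)

lemma sum_list_ind: "sum_list (map ind xs) = vs (mset xs)"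
  by (induction xs) auto

lemma rs_of:
  assumes "set_mset G \<subseteq> E" "{a, b} \<in> E"
  shows "\<exists>rs. length rs = size G \<and> (\<forall>r\<in>set rs. inM E 2 (r + ind {a, b})) \<and> sum_list rs = vs G"
proof -
  obtain xs where xs: "mset xs = G" using ex_mset by blast
  have "inM E 2 (r + ind {a, b})" if rin: "r \<in> set (map ind xs)" for r
  proof -
    obtain f where f: "f \<in> set xs" "r = ind f" using rin by auto
    then have "f \<in> E" using assms(1) xs by auto
    then have "inM E (size {#f, {a, b}#}) (vs {#f, {a, b}#})" using assms(2) by (intro inM_vs) auto
    then show ?thesis using f by (simp add: numeral_2_eq_2)
  qed
  moreover have "length (map ind xs) = size G" using xs by auto
  moreover have "sum_list (map ind xs) = vs G" using sum_list_ind[of xs] xs by simp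
  ultimately show ?thesis by blast
qed

lemma not_both:
  assumes "\<And>e. e \<in> E \<Longrightarrow> card e = 2" "f \<in> E" "a \<in> f" "b \<in> f" "a \<noteq> b"
  shows "f = {a, b}"
proof -
  have "{a, b} \<subseteq> f" using assms by auto
  moreover have "card {a, b} = card f" using assms by simp
  moreover have "finite f" using assms(1)[OF assms(2)] by (metis card.infinite zero_neq_numeral)
  ultimately show ?thesis by (metis card_subset_eq)
qed

lemma JK:
  assumes sg: "\<And>e. e \<in> E \<Longrightarrow> card e = 2" and abE: "{a, b} \<in> E" and ab: "a \<noteq> b"
    and M: "inM E (Suc k) (D + ind {a, b})"
  shows "\<exists>rs. length rs = k \<and> (\<forall>r\<in>set rs. inM E 2 (r + ind {a, b})) \<and> sum_list rs \<le> D"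
proof -
  obtain F where F: "size F = Suc k" "set_mset F \<subseteq> E" "vs F \<le> D + ind {a, b}" using M unfolding inM_def by blast
  have pt: "vs F v \<le> D v + ind {a, b} v" for v using F(3) by (simp add: le_fun_def)
  have fin: "\<exists>rs. length rs = k \<and> (\<forall>r\<in>set rs. inM E 2 (r + ind {a, b})) \<and> sum_list rs \<le> D"
    if "set_mset G \<subseteq> E" "size G = k" "vs G \<le> D" for G
    using rs_of[OF that(1) abE] that by auto
  show ?thesis
  proof (cases "{a, b} \<in># F")
    case True
    then obtain G where G: "F = add_mset {a, b} G" by (metis multi_member_split)
    have "vs G + ind {a, b} \<le> D + ind {a, b}" using F(3) G by (simp add: add.commute)
    then have "vs G \<le> D" by (rule add_le_imp_le_right)
    then show ?thesis using fin[of G] F G by auto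
  next
    case nab: False
    have nb: "b \<notin> f" if "f \<in># F" "a \<in> f" for f
    proof
      assume "b \<in> f"
      moreover have "f \<in> E" using that F(2) by auto
      ultimately have "f = {a, b}" using not_both[of E f a b] sg that ab by blast
      then show False using that nab by simp
    qed
    have na: "a \<notin> f" if "f \<in># F" "b \<in> f" for f
    proof
      assume "a \<in> f"
      moreover have "f \<in> E" using that F(2) by auto
      ultimately have "f = {a, b}" using not_both[of E f a b] sg that ab by blast
      then show False using that nab by simp
    qed
    have one: "?thesis" if z: "z \<in> {a, b}" "z' \<in> {a, b}" "z \<noteq> z'" and tz: "vs F z > D z" and tz': "vs F z' \<le> D z'" for z z'
    proof -
      obtain f1 where f1: "f1 \<in># F" "z \<in> f1" using vs_pos[of F z] tz by auto
      have "z' \<notin> f1" using nb[OF f1(1)] na[OF f1(1)] f1(2) z by auto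
      obtain G where G: "F = add_mset f1 G" using f1(1) by (metis multi_member_split)
      have "vs G \<le> D"
      proof (rule le_funI)
        fix v
        have "vs F v = ind f1 v + vs G v" using G by simp
        moreover have "vs F v \<le> D v + ind {a, b} v" by (rule pt)
        ultimately show "vs G v \<le> D v" using tz' \<open>z' \<notin> f1\<close> f1(2) z
          by (cases "v = z"; cases "v = z'") (auto simp: ind_def)
      qed
      then show ?thesis using fin[of G] F G by auto
    qed
    show ?thesis
    proof (cases "vs F a > D a")
      case tA: True
      show ?thesis
      proof (cases "vs F b > D b")
        case tB: True
        obtain f1 where f1: "f1 \<in># F" "a \<in> f1" using vs_pos[of F a] tA by auto
        have bf1: "b \<notin> f1" using nb f1 by blast
        obtain F1 where F1: "F = add_mset f1 F1" using f1(1) by (metis multi_member_split)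
        have "vs F1 b > 0" using tB F1 bf1 by (simp add: ind_def)
        then have "\<exists>f\<in>#F1. b \<in> f" by (rule vs_pos)
        then obtain f2 where f2: "f2 \<in># F1" "b \<in> f2" by auto
        have f2F: "f2 \<in># F" using F1 f2 by simp
        have af2: "a \<notin> f2" using na f2F f2(2) by blast
        obtain G where G: "F1 = add_mset f2 G" using f2(1) by (metis multi_member_split)
        obtain x where x: "f1 = {a, x}" "x \<noteq> a"
        proof -
          obtain p q where "f1 = {p, q}" "p \<noteq> q" using sg[of f1] F(2) f1(1) by (auto simp: card_2_iff)
          then show ?thesis using that f1(2) by auto
        qed
        obtain y where y: "f2 = {b, y}" "y \<noteq> b"
        proof -
          obtain p q where "f2 = {p, q}" "p \<noteq> q" using sg[of f2] F(2) f2F by (auto simp: card_2_iff)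
          then show ?thesis using that f2(2) by auto
        qed
        define r where "r = dl x + dl y"
        have rab: "r + ind {a, b} = ind f1 + ind f2"
          using x y ab by (simp add: r_def ind_pair algebra_simps insert_commute)
        have "inM E (size {#f1, f2#}) (vs {#f1, f2#})" using F(2) f1(1) f2F by (intro inM_vs) auto
        then have rR: "inM E 2 (r + ind {a, b})" using rab by (simp add: numeral_2_eq_2)
        have "(r + vs G) + ind {a, b} = (r + ind {a, b}) + vs G" by (simp only: ac_simps)
        also have "\<dots> = ind f1 + ind f2 + vs G" using rab by simp
        also have "\<dots> = vs F" using F1 G by (simp add: add.assoc)
        finally have "(r + vs G) + ind {a, b} = vs F" .
        then have "(r + vs G) + ind {a, b} \<le> D + ind {a, b}" using F(3) by simp
        then have rG: "r + vs G \<le> D" by (rule add_le_imp_le_right)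
        have GE: "set_mset G \<subseteq> E" using F(2) F1 G by auto
        obtain rs where rs: "length rs = size G" "\<forall>r\<in>set rs. inM E 2 (r + ind {a, b})" "sum_list rs = vs G"
          using rs_of[OF GE abE] by blast
        have "length (r # rs) = k" using rs(1) F(1) F1 G by simp
        moreover have "\<forall>r'\<in>set (r # rs). inM E 2 (r' + ind {a, b})" using rs(2) rR by simp
        moreover have "sum_list (r # rs) \<le> D" using rG rs(3) by simp
        ultimately show ?thesis by blast
      next
        case False
        then show ?thesis using one[of a b] tA ab by simp
      qed
    next
      case nA: False
      show ?thesis
      proof (cases "vs F b > D b")
        case tB: True
        then show ?thesis using one[of b a] nA ab by simp
      next
        case nB: False
        obtain f where "f \<in># F" using F(1) by (metis multiset_nonemptyE size_empty nat.distinct(1))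
        then obtain G where G: "F = add_mset f G" by (metis multi_member_split)
        have "vs G \<le> D"
        proof (rule le_funI)
          fix v
          have "vs F v = ind f v + vs G v" using G by simp
          moreover have "vs F v \<le> D v + ind {a, b} v" by (rule pt)
          ultimately show "vs G v \<le> D v" using nA nB by (cases "v = a"; cases "v = b") (auto simp: ind_def)
        qed
        then show ?thesis using fin[of G] F G by auto
      qed
    qed
  qed
qed



definition emv :: "'v set \<Rightarrow> ('v \<Rightarrow>\<^sub>0 nat)" where
  "emv e = (\<Sum>v\<in>e. Poly_Mapping.single v 1)"

lemma lookup_emv: "Poly_Mapping.lookup (emv (e :: ('v::finite) set)) = ind e"
proof
  fix w
  have "Poly_Mapping.lookup (emv e) w = (\<Sum>v\<in>e. (1 when v = w))"
    by (simp add: emv_def lookup_sum lookup_single)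
  also have "\<dots> = ind e w" by (simp add: ind_def when_def)
  finally show "Poly_Mapping.lookup (emv e) w = ind e w" .
qed

lemma edge_mon_emv: "edge_mon e = monom1 (emv e)"
  by (simp add: edge_mon_def emv_def)

lemma edge_ideal_MI:
  "edge_ideal E = (MI {f. \<exists>e\<in>E. ind e \<le> f} :: (('v::finite), 'k::comm_ring_1) mpoly set)"
proof -
  have "edge_mon ` E = (monom1 ` (emv ` E) :: ('v, 'k) mpoly set)"
    by (auto simp: edge_mon_emv)
  moreover have "upcl (emv ` E) = {f. \<exists>e\<in>E. ind e \<le> f}"
    by (auto simp: upcl_def lookup_emv)
  ultimately show ?thesis unfolding edge_ideal_def by (simp add: ig_monom_MI)
qed

lemma upc_U1: "upc {f. \<exists>e\<in>E. ind e \<le> f}"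
  unfolding upc_def using order_trans by blast

lemma pw_inM: "f \<in> pw {f. \<exists>e\<in>E. ind e \<le> f} k \<longleftrightarrow> inM E k f"
proof
  assume "f \<in> pw {f. \<exists>e\<in>E. ind e \<le> f} k"
  then obtain xs where xs: "length xs = k" "set xs \<subseteq> {f. \<exists>e\<in>E. ind e \<le> f}" "sum_list xs \<le> f"
    unfolding pw_def by blast
  have "\<exists>F. size F = length xs \<and> set_mset F \<subseteq> E \<and> vs F \<le> sum_list xs" using xs(2)
  proof (induction xs)
    case Nil then show ?case by (intro exI[of _ "{#}"]) simp
  next
    case (Cons x xs)
    then obtain F where F: "size F = length xs" "set_mset F \<subseteq> E" "vs F \<le> sum_list xs" by auto
    obtain e where e: "e \<in> E" "ind e \<le> x" using Cons.prems by auto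
    have "vs (add_mset e F) \<le> sum_list (x # xs)" using add_mono[OF e(2) F(3)] by simp
    moreover have "size (add_mset e F) = length (x # xs)" using F by simp
    moreover have "set_mset (add_mset e F) \<subseteq> E" using F e by simp
    ultimately show ?case by blast
  qed
  then show "inM E k f" unfolding inM_def using xs(1,3) order_trans by blast
next
  assume "inM E k f"
  then obtain F where F: "size F = k" "set_mset F \<subseteq> E" "vs F \<le> f" unfolding inM_def by blast
  obtain xs where xs: "mset xs = F" using ex_mset by blast
  have "length (map ind xs) = k" using xs F by auto
  moreover have "set (map ind xs) \<subseteq> {f. \<exists>e\<in>E. ind e \<le> f}" using xs F by auto
  moreover have "sum_list (map ind xs) \<le> f" using sum_list_ind[of xs] xs F by simp
  ultimately show "f \<in> pw {f. \<exists>e\<in>E. ind e \<le> f} k" unfolding pw_def by blast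
qed

lemma prod_edge_mon_list:
  "prod_list (map edge_mon es) = (monom1 (sum_list (map emv es)) :: ('v, 'k::comm_ring_1) mpoly)"
proof -
  have em: "(edge_mon :: 'v set \<Rightarrow> ('v, 'k) mpoly) = monom1 \<circ> emv" by (rule ext) (simp add: edge_mon_emv)
  have "prod_list (map edge_mon es) = prod_list (map monom1 (map emv es) :: ('v, 'k) mpoly list)"
    unfolding em by (simp only: map_map)
  also have "\<dots> = monom1 (sum_list (map emv es))" by (rule prod_monom1)
  finally show ?thesis .
qed

lemma lookup_sum_list_emv: "Poly_Mapping.lookup (sum_list (map emv es)) = sum_list (map ind (es :: ('v::finite) set list))"
  by (induction es) (auto simp: lookup_add_fun lookup_emv)

lemma prod_edge_mon_set:
  "finite S \<Longrightarrow> (\<Prod>j\<in>S. edge_mon (g j)) = (monom1 (\<Sum>j\<in>S. emv (g j)) :: ('v, 'k::comm_ring_1) mpoly)"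
proof (induction S rule: finite_induct)
  case empty then show ?case by (simp add: monom1_def)
next
  case (insert x S) then show ?case by (simp add: monom1_add edge_mon_emv)
qed

lemma fun_sum_apply: "(sum f S :: 'a \<Rightarrow> nat) x = sum (\<lambda>j. f j x) S"
  by (induction S rule: infinite_finite_induct) auto

lemma lookup_sum_emv: "Poly_Mapping.lookup (\<Sum>j\<in>S. emv (g j)) = (\<Sum>j\<in>S. ind (g j :: ('v::finite) set))"
  by (rule ext) (simp add: lookup_sum lookup_emv fun_sum_apply)

definition deg :: "('v::finite \<Rightarrow> nat) \<Rightarrow> nat" where "deg f = (\<Sum>v\<in>UNIV. f v)"

lemma deg_add: "deg (f + g) = deg f + deg g" by (simp add: deg_def sum.distrib)
lemma deg_mono: "f \<le> g \<Longrightarrow> deg f \<le> deg g" by (simp add: deg_def le_fun_def sum_mono)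
lemma deg_ind: "deg (ind (e :: ('v::finite) set)) = card e"
  by (simp add: deg_def ind_def sum.If_cases)
lemma deg_dl: "deg (dl (x :: 'v::finite)) = 1"
  by (simp add: deg_def dl_def sum.If_cases)
lemma deg_vs: "(\<And>e. e \<in># F \<Longrightarrow> card e = 2) \<Longrightarrow> deg (vs (F :: ('v::finite) set multiset)) = 2 * size F"
  by (induction F) (auto simp: deg_add deg_ind, simp add: deg_def)


theorem theorem3p8:
  fixes E :: "('v::finite) set set" and es :: "'v set list" and s :: nat
  assumes "simple_graph E"
    and "s \<ge> 1" and "length es = s" and "set es \<subseteq> E"
    and "squarefree_monomial_ideal
           (colon (ideal_pow (edge_ideal E :: ('v, 'k::field) mpoly set) (s + 1))
                  (prod_list (map edge_mon es)))"
  shows "\<forall>i<s.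
    colon (ideal_pow (edge_ideal E :: ('v, 'k) mpoly set) (s + 1)) (prod_list (map edge_mon es))
    = colon (ideal_pow (colon (ideal_pow (edge_ideal E) 2) (edge_mon (es ! i))) s)
            (\<Prod>j\<in>{j. j < s \<and> j \<noteq> i}. edge_mon (es ! j))"
proof (intro allI impI)
  fix i assume i: "i < s"
  define U1 where "U1 = {f. \<exists>e\<in>E. ind e \<le> f}"
  have sg: "\<And>e. e \<in> E \<Longrightarrow> card e = 2" using assms(1) unfolding simple_graph_def by blast
  have epsE: "es ! i \<in> E" using assms(3,4) i nth_mem by blast
  obtain a b where abd: "es ! i = {a, b}" "a \<noteq> b" using sg[OF epsE] by (auto simp: card_2_iff)
  define S where "S = {j. j < s \<and> j \<noteq> i}"
  have finS: "finite S" unfolding S_def by simp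
  have S2: "S = {0..<s} - {i}" unfolding S_def by auto
  define Pm where "Pm = image_mset (\<lambda>j. es ! j) (mset_set S)"
  have vsPm: "vs Pm = (\<Sum>j\<in>S. ind (es ! j))"
    by (simp add: Pm_def vs_def image_mset.compositionality sum_unfold_sum_mset comp_def)
  have sizePm: "size Pm = s - 1" using i by (simp add: Pm_def S2)
  have PmE: "set_mset Pm \<subseteq> E"
  proof
    fix e assume "e \<in># Pm"
    then obtain j where "j \<in> S" "e = es ! j" using finS unfolding Pm_def by auto
    then show "e \<in> E" using assms(3,4) nth_mem unfolding S_def by blast
  qed
  have gsum: "sum_list (map ind es) = vs Pm + ind {a, b}"
  proof -
    have "sum_list (map ind es) = (\<Sum>j\<in>{0..<s}. ind (es ! j))"
      using assms(3) by (simp add: sum_list_sum_nth)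
    also have "\<dots> = ind (es ! i) + (\<Sum>j\<in>{0..<s} - {i}. ind (es ! j))"
      using i by (subst sum.remove[of _ i]) auto
    finally show ?thesis using vsPm abd S2 by (simp add: add.commute)
  qed
  have E1: "edge_ideal E = (MI U1 :: ('v, 'k) mpoly set)" unfolding U1_def by (rule edge_ideal_MI)
  have upU1: "upc U1" unfolding U1_def by (rule upc_U1)
  define J where "J = {f. inM E (s + 1) (f + (vs Pm + ind {a, b}))}"
  define R where "R = {f. inM E 2 (f + ind {a, b})}"
  define K where "K = {f. f + vs Pm \<in> pw R s}"
  have L: "colon (ideal_pow (edge_ideal E :: ('v, 'k) mpoly set) (s + 1)) (prod_list (map edge_mon es)) = MI J"
  proof -
    have "colon (ideal_pow (edge_ideal E :: ('v, 'k) mpoly set) (s + 1)) (prod_list (map edge_mon es))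
        = colon (MI (pw U1 (s + 1))) (monom1 (sum_list (map emv es)))"
      by (simp add: E1 ideal_pow_MI[OF upU1] prod_edge_mon_list)
    also have "\<dots> = MI {f. f + sum_list (map ind es) \<in> pw U1 (s + 1)}"
      by (simp add: colon_MI lookup_sum_list_emv)
    also have "\<dots> = MI J" by (simp add: J_def gsum U1_def pw_inM)
    finally show ?thesis .
  qed
  have Rr: "colon (ideal_pow (edge_ideal E) 2) (edge_mon (es ! i)) = (MI R :: ('v, 'k) mpoly set)"
  proof -
    have "colon (ideal_pow (edge_ideal E) 2) (edge_mon (es ! i))
        = colon (MI (pw U1 2)) (monom1 (emv (es ! i)) :: ('v, 'k) mpoly)"
      by (simp add: E1 ideal_pow_MI[OF upU1] edge_mon_emv)
    also have "\<dots> = MI {f. f + ind (es ! i) \<in> pw U1 2}" by (simp add: colon_MI lookup_emv)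
    also have "\<dots> = MI R" by (simp add: R_def abd U1_def pw_inM)
    finally show ?thesis .
  qed
  have upR: "upc R" unfolding R_def upc_def by (auto intro: inM_mono add_right_mono)
  have Rt: "colon (ideal_pow (colon (ideal_pow (edge_ideal E) 2) (edge_mon (es ! i))) s)
            (\<Prod>j\<in>{j. j < s \<and> j \<noteq> i}. edge_mon (es ! j)) = (MI K :: ('v, 'k) mpoly set)"
  proof -
    have "colon (ideal_pow (colon (ideal_pow (edge_ideal E) 2) (edge_mon (es ! i))) s)
            (\<Prod>j\<in>{j. j < s \<and> j \<noteq> i}. edge_mon (es ! j))
        = colon (MI (pw R s)) (monom1 (\<Sum>j\<in>S. emv (es ! j)) :: ('v, 'k) mpoly)"
      using finS by (simp add: Rr ideal_pow_MI[OF upR] prod_edge_mon_set S_def)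
    also have "\<dots> = MI K" by (simp add: colon_MI lookup_sum_emv K_def vsPm)
    finally show ?thesis .
  qed
  obtain A where A: "\<forall>\<alpha>\<in>A. \<forall>v. Poly_Mapping.lookup \<alpha> v \<le> 1" "(MI J :: ('v, 'k) mpoly set) = ideal_gen (monom1 ` A)"
    using assms(5) unfolding L squarefree_monomial_ideal_def by blast
  have JA: "J = upcl A"
    using A(2) unfolding ig_monom_MI by (rule MI_inj)
  have H: "\<not> inM E (size Pm + 2) (dl x + dl x + vs Pm + ind {a, b})" for x
  proof
    assume "inM E (size Pm + 2) (dl x + dl x + vs Pm + ind {a, b})"
    then have "dl x + dl x \<in> J" unfolding J_def using sizePm assms(2) by (simp add: add.assoc)
    then obtain \<alpha> where al: "\<alpha> \<in> A" "Poly_Mapping.lookup \<alpha> \<le> dl x + dl x" unfolding JA upcl_def by blast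
    have "Poly_Mapping.lookup \<alpha> \<le> dl x"
    proof (rule le_funI)
      fix v
      have "Poly_Mapping.lookup \<alpha> v \<le> 1" using A(1) al(1) by blast
      moreover have "Poly_Mapping.lookup \<alpha> v \<le> dl x v + dl x v" using al(2) by (simp add: le_fun_def)
      ultimately show "Poly_Mapping.lookup \<alpha> v \<le> dl x v" by (auto simp: dl_def split: if_splits)
    qed
    then have "dl x \<in> J" unfolding JA upcl_def using al(1) by blast
    then obtain F where F: "size F = s + 1" "set_mset F \<subseteq> E" "vs F \<le> dl x + (vs Pm + ind {a, b})"
      unfolding J_def inM_def by blast
    have "deg (vs F) = 2 * (s + 1)" using deg_vs[of F] F(1,2) sg by auto
    moreover have "deg (dl x + (vs Pm + ind {a, b})) = 1 + 2 * (s - 1) + 2"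
      using deg_vs[of Pm] PmE sg sizePm abd by (auto simp: deg_add deg_dl deg_ind)
    moreover have "deg (vs F) \<le> deg (dl x + (vs Pm + ind {a, b}))" using F(3) by (rule deg_mono)
    ultimately show False using assms(2) by simp
  qed
  interpret ctx E a b Pm
    using sg epsE abd PmE H by unfold_locales auto
  have "J = K"
  proof (rule set_eqI, rule iffI)
    fix f assume "f \<in> J"
    then have "inM E (Suc s) ((f + vs Pm) + ind {a, b})" unfolding J_def by (simp add: add.assoc)
    moreover have abE: "{a, b} \<in> E" using epsE abd by simp
    ultimately have "\<exists>rs. length rs = s \<and> (\<forall>r\<in>set rs. inM E 2 (r + ind {a, b})) \<and> sum_list rs \<le> f + vs Pm"
      using JK[OF sg] abd(2) by blast
    then obtain rs where rs: "length rs = s" "\<forall>r\<in>set rs. inM E 2 (r + ind {a, b})" "sum_list rs \<le> f + vs Pm"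
      by auto
    then show "f \<in> K" unfolding K_def R_def pw_def by auto
  next
    fix f assume "f \<in> K"
    then obtain rs where rs: "length rs = s" "set rs \<subseteq> R" "sum_list rs \<le> f + vs Pm"
      unfolding K_def pw_def by blast
    have "inM E (size Pm + 2) (f + vs Pm + ind {a, b})"
      using KJ[of rs f] rs sizePm assms(2) unfolding R_def by auto
    then show "f \<in> J" unfolding J_def using sizePm assms(2) by (simp add: add.assoc)
  qed
  then show "colon (ideal_pow (edge_ideal E :: ('v, 'k) mpoly set) (s + 1)) (prod_list (map edge_mon es))
    = colon (ideal_pow (colon (ideal_pow (edge_ideal E) 2) (edge_mon (es ! i))) s)
            (\<Prod>j\<in>{j. j < s \<and> j \<noteq> i}. edge_mon (es ! j))"
    using L Rt by simp
qed


end
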